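(* Fix a state $s$, a utility $u:\mathcal S\times\Omega\times\mathcal A\to[0,1]$, a function $Q:\mathcal S\times\Omega\times\mathcal A\to[0,H]$, a prior $\mu^*\in\Delta(\Omega)$ that is $(p_0,D)$-regular at $s$, and $\epsilon>0$. If $\hat\mu\in\Delta(\Omega)$ satisfies $\|\hat\mu-\mu^*\|_1\le\epsilon$, then $$\mathrm{Gap}\big(s,\hat\mu,\mathbb B(\hat\mu,\epsilon);Q\big)\le\frac{2H\epsilon}{p_0D}.$$
   Context: $\mathcal A$ is a finite action set, $\mathcal S$ a state space and $\Omega$ an outcome space; $\Delta(\Omega)$ is the set of probability distributions on $\Omega$ (with densities/mass functions $\mu(\omega)$), and $\|\mu-\mu'\|_1=\int_\Omega|\mu(\omega)-\mu'(\omega)|\,\mathrm d\omega$. A signaling scheme $\pi$ assigns to each $(s,\omega)$ a distribution $\pi(\cdot\mid s,\omega)\in\Delta(\mathcal A)$. For a prior $\mu$ and utility $u$, $\mathrm{Pers}(\mu,u)$ is the set of $\pi$ with $\int_\Omega\mu(\omega)\pi(a\mid s,\omega)[u(s,\omega,a)-u(s,\omega,a')]\,\mathrm d\omega\ge0$ for all $a,a'\in\mathcal A$ and states $s$; for a set $\mathcal B\subseteq\Delta(\Omega)$, $\mathrm{Pers}(\mathcal B,u)=\bigcap_{\mu'\in\mathcal B}\mathrm{Pers}(\mu',u)$. $\langle Q,\mu\otimes\pi\rangle(s)=\mathbb E_{\omega\sim\mu,\,a\sim\pi(\cdot\mid s,\omega)}[Q(s,\omega,a)]$. The robustness gap is $\mathrm{Gap}(s,\mu,\mathcal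 B;Q)=\max_{\pi\in\mathrm{Pers}(\mu,u)}\langle Q,\mu\otimes\pi\rangle(s)-\max_{\pi\in\mathrm{Pers}(\mathcal B,u)}\langle Q,\mu\otimes\pi\rangle(s)$. $\mathbb B(\mu,\epsilon)=\{\mu'\in\Delta(\Omega):\|\mu-\mu'\|_1\le\epsilon\}$. A prior $\mu$ is $(p_0,D)$-regular at $s$ if $\Pr_{\omega\sim\mu}[\omega\in\mathcal W_{s,a}(D)]\ge p_0$ for all $a\in\mathcal A$, where $\mathcal W_{s,a}(D)=\{\omega:u(s,\omega,a)-u(s,\omega,a')\ge D\ \forall a'\in\mathcal A\setminus\{a\}\}$. *)

theory Defs
  imports "HOL-Analysis.Analysis"
begin

text \<open>The outcome space \<Omega> carries a reference measure M (the measure "d\<omega>");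
  priors are probability densities w.r.t. M.\<close>

definition prob_dens :: "'w measure \<Rightarrow> ('w \<Rightarrow> real) set" where
  "prob_dens M = {\<mu>. \<mu> \<in> borel_measurable M \<and> (\<forall>\<omega>\<in>space M. 0 \<le> \<mu> \<omega>)
                     \<and> integrable M \<mu> \<and> (\<integral>\<omega>. \<mu> \<omega> \<partial>M) = 1}"

definition l1_dist :: "'w measure \<Rightarrow> ('w \<Rightarrow> real) \<Rightarrow> ('w \<Rightarrow> real) \<Rightarrow> real" where
  "l1_dist M \<mu> \<mu>' = (\<integral>\<omega>. \<bar>\<mu> \<omega> - \<mu>' \<omega>\<bar> \<partial>M)"

text \<open>Signaling schemes: \<pi> s \<omega> a = \<pi>(a | s, \<omega>), a distribution over the finite action type.\<close>
definition schemes :: "'w measure \<Rightarrow> ('s \<Rightarrow> 'w \<Rightarrow> 'a::finite \<Rightarrow> real) set" where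
  "schemes M = {\<pi>. (\<forall>s a. (\<lambda>\<omega>. \<pi> s \<omega> a) \<in> borel_measurable M)
                  \<and> (\<forall>s \<omega> a. 0 \<le> \<pi> s \<omega> a) \<and> (\<forall>s \<omega>. (\<Sum>a\<in>UNIV. \<pi> s \<omega> a) = 1)}"

definition Pers :: "'w measure \<Rightarrow> ('w \<Rightarrow> real) \<Rightarrow> ('s \<Rightarrow> 'w \<Rightarrow> 'a::finite \<Rightarrow> real)
                      \<Rightarrow> ('s \<Rightarrow> 'w \<Rightarrow> 'a \<Rightarrow> real) set" where
  "Pers M \<mu> u = {\<pi> \<in> schemes M. \<forall>s a a'.
      (\<integral>\<omega>. \<mu> \<omega> * \<pi> s \<omega> a * (u s \<omega> a - u s \<omega> a') \<partial>M) \<ge> 0}"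

definition PersSet :: "'w measure \<Rightarrow> ('w \<Rightarrow> real) set \<Rightarrow> ('s \<Rightarrow> 'w \<Rightarrow> 'a::finite \<Rightarrow> real)
                      \<Rightarrow> ('s \<Rightarrow> 'w \<Rightarrow> 'a \<Rightarrow> real) set" where
  "PersSet M B u = {\<pi> \<in> schemes M. \<forall>\<mu>'\<in>B. \<pi> \<in> Pers M \<mu>' u}"

definition payoff :: "'w measure \<Rightarrow> ('s \<Rightarrow> 'w \<Rightarrow> 'a::finite \<Rightarrow> real) \<Rightarrow> ('w \<Rightarrow> real)
                      \<Rightarrow> ('s \<Rightarrow> 'w \<Rightarrow> 'a \<Rightarrow> real) \<Rightarrow> 's \<Rightarrow> real" where
  "payoff M Q \<mu> \<pi> s = (\<integral>\<omega>. \<mu> \<omega> * (\<Sum>a\<in>UNIV. \<pi> s \<omega> a * Q s \<omega> a) \<partial>M)"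

definition Gap :: "'w measure \<Rightarrow> ('s \<Rightarrow> 'w \<Rightarrow> 'a::finite \<Rightarrow> real) \<Rightarrow> ('s \<Rightarrow> 'w \<Rightarrow> 'a \<Rightarrow> real)
                   \<Rightarrow> 's \<Rightarrow> ('w \<Rightarrow> real) \<Rightarrow> ('w \<Rightarrow> real) set \<Rightarrow> real" where
  "Gap M u Q s \<mu> B =
     (SUP \<pi>\<in>Pers M \<mu> u. payoff M Q \<mu> \<pi> s) - (SUP \<pi>\<in>PersSet M B u. payoff M Q \<mu> \<pi> s)"

definition ball_l1 :: "'w measure \<Rightarrow> ('w \<Rightarrow> real) \<Rightarrow> real \<Rightarrow> ('w \<Rightarrow> real) set" where
  "ball_l1 M \<mu> \<epsilon> = {\<mu>' \<in> prob_dens M. l1_dist M \<mu> \<mu>' \<le> \<epsilon>}"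

definition Wset :: "'w measure \<Rightarrow> ('s \<Rightarrow> 'w \<Rightarrow> 'a \<Rightarrow> real) \<Rightarrow> 's \<Rightarrow> 'a \<Rightarrow> real \<Rightarrow> 'w set" where
  "Wset M u s a D = {\<omega> \<in> space M. \<forall>a'. a' \<noteq> a \<longrightarrow> u s \<omega> a - u s \<omega> a' \<ge> D}"

definition regular :: "'w measure \<Rightarrow> ('s \<Rightarrow> 'w \<Rightarrow> 'a \<Rightarrow> real) \<Rightarrow> 's \<Rightarrow> ('w \<Rightarrow> real)
                       \<Rightarrow> real \<Rightarrow> real \<Rightarrow> bool" where
  "regular M u s \<mu> p0 D = (\<forall>a. (\<integral>\<omega>. indicator (Wset M u s a D) \<omega> * \<mu> \<omega> \<partial>M) \<ge> p0)"

end

theory Submission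
  imports Defs
begin

definition isb :: "('s \<Rightarrow> 'w \<Rightarrow> 'a \<Rightarrow> real) \<Rightarrow> 's \<Rightarrow> 'w \<Rightarrow> 'a \<Rightarrow> real" where
  "isb u s \<omega> b = (if \<forall>b'. u s \<omega> b' \<le> u s \<omega> b then 1 else 0)"

definition piF :: "('s \<Rightarrow> 'w \<Rightarrow> 'a::finite \<Rightarrow> real) \<Rightarrow> 's \<Rightarrow> 'w \<Rightarrow> 'a \<Rightarrow> real" where
  "piF u s \<omega> a = isb u s \<omega> a / (\<Sum>b\<in>UNIV. isb u s \<omega> b)"

lemma isb_sum_ge1: "(\<Sum>b\<in>(UNIV::'a::finite set). isb u s \<omega> b) \<ge> 1"
proof -
  have "Max (range (u s \<omega>)) \<in> range (u s \<omega>)" by (rule Max_in) auto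
  then obtain b where b: "u s \<omega> b = Max (range (u s \<omega>))" by (metis rangeE)
  have "\<forall>b'. u s \<omega> b' \<le> u s \<omega> b" unfolding b by (auto intro: Max_ge)
  then have "1 \<le> isb u s \<omega> b" by (simp add: isb_def)
  also have "\<dots> \<le> (\<Sum>b\<in>(UNIV::'a set). isb u s \<omega> b)"
    by (rule member_le_sum) (auto simp: isb_def)
  finally show ?thesis .
qed

lemma piF_nonneg: "0 \<le> piF u s \<omega> a"
  using isb_sum_ge1[of u s \<omega>] by (auto simp: piF_def isb_def)

lemma piF_sum: "(\<Sum>a\<in>UNIV. piF u s \<omega> (a::'a::finite)) = 1"
  using isb_sum_ge1[of u s \<omega>] unfolding piF_def by (simp add: sum_divide_distrib[symmetric])

lemma piF_le1: "piF u s \<omega> (a::'a::finite) \<le> 1"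
proof -
  have "piF u s \<omega> a \<le> (\<Sum>a\<in>UNIV. piF u s \<omega> a)"
    by (rule member_le_sum) (auto simp: piF_nonneg)
  then show ?thesis by (simp add: piF_sum)
qed

lemma piF_Delta_nonneg: "0 \<le> piF u s \<omega> (a::'a::finite) * (u s \<omega> a - u s \<omega> a')"
proof (cases "\<forall>b'. u s \<omega> b' \<le> u s \<omega> a")
  case True
  then have "0 \<le> u s \<omega> a - u s \<omega> a'" by auto
  then show ?thesis using piF_nonneg[of u s \<omega> a] by (simp add: mult_nonneg_nonneg)
next
  case False
  then show ?thesis by (auto simp: piF_def isb_def)
qed

lemma piF_W:
  assumes D: "D > 0" and W: "\<forall>a'. a' \<noteq> a \<longrightarrow> u s \<omega> a - u s \<omega> a' \<ge> D"
  shows "piF u s \<omega> (a::'a::finite) = 1"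
proof -
  have "isb u s \<omega> b = (if b = a then 1 else 0)" for b
  proof (cases "b = a")
    case True then show ?thesis using W D
      by (auto simp: isb_def)
  next
    case False
    then have "u s \<omega> b < u s \<omega> a" using W D by force
    then show ?thesis using False by (auto simp: isb_def not_le)
  qed
  then show ?thesis unfolding piF_def by simp
qed

lemma piF_meas:
  fixes u :: "'s \<Rightarrow> 'w \<Rightarrow> 'a::finite \<Rightarrow> real"
  assumes "\<forall>s a. (\<lambda>\<omega>. u s \<omega> a) \<in> borel_measurable M"
  shows "(\<lambda>\<omega>. piF u s \<omega> a) \<in> borel_measurable M"
proof -
  have m[measurable]: "\<And>s a. (\<lambda>\<omega>. u s \<omega> a) \<in> borel_measurable M" using assms by auto
  have p: "Measurable.pred M (\<lambda>\<omega>. \<forall>b'\<in>UNIV. u s \<omega> b' \<le> u s \<omega> b)" for b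
    by (rule pred_intros_finite) measurable
  have [measurable]: "(\<lambda>\<omega>. isb u s \<omega> b) \<in> borel_measurable M" for b
    using p[of b] unfolding isb_def by simp
  show ?thesis unfolding piF_def by measurable
qed

lemma piF_schemes:
  fixes u :: "'s \<Rightarrow> 'w \<Rightarrow> 'a::finite \<Rightarrow> real"
  assumes "\<forall>s a. (\<lambda>\<omega>. u s \<omega> a) \<in> borel_measurable M"
  shows "piF u \<in> schemes M"
  unfolding schemes_def using piF_meas[OF assms] piF_nonneg piF_sum by auto

lemma piF_Pers:
  fixes u :: "'s \<Rightarrow> 'w \<Rightarrow> 'a::finite \<Rightarrow> real"
  assumes "\<forall>s a. (\<lambda>\<omega>. u s \<omega> a) \<in> borel_measurable M"
    and "\<forall>\<omega>\<in>space M. 0 \<le> \<mu> \<omega>"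
  shows "piF u \<in> Pers M \<mu> u"
  unfolding Pers_def
proof (intro CollectI conjI allI piF_schemes[OF assms(1)])
  fix s a a'
  show "0 \<le> (\<integral>\<omega>. \<mu> \<omega> * piF u s \<omega> a * (u s \<omega> a - u s \<omega> a') \<partial>M)"
    apply (rule integral_nonneg_AE, rule AE_I2)
    using assms(2) piF_Delta_nonneg[of u s _ a a']
    by (metis mult.assoc mult_nonneg_nonneg)
qed

lemma int_bdd:
  fixes \<mu> g :: "'w \<Rightarrow> real"
  assumes "integrable M \<mu>" "g \<in> borel_measurable M" "\<And>\<omega>. \<omega> \<in> space M \<Longrightarrow> \<bar>g \<omega>\<bar> \<le> C"
  shows "integrable M (\<lambda>\<omega>. \<mu> \<omega> * g \<omega>)"
proof (rule Bochner_Integration.integrable_bound[where f="\<lambda>\<omega>. C * \<mu> \<omega>"])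
  show "integrable M (\<lambda>\<omega>. C * \<mu> \<omega>)" using assms(1) by simp
  show "(\<lambda>\<omega>. \<mu> \<omega> * g \<omega>) \<in> borel_measurable M"
    using assms(1,2) by (simp add: borel_measurable_integrable)
  show "AE x in M. norm (\<mu> x * g x) \<le> norm (C * \<mu> x)"
  proof (rule AE_I2)
    fix x assume "x \<in> space M"
    then have "\<bar>g x\<bar> \<le> C" by (rule assms(3))
    then have "\<bar>\<mu> x\<bar> * \<bar>g x\<bar> \<le> \<bar>\<mu> x\<bar> * \<bar>C\<bar>" by (intro mult_left_mono) auto
    then show "norm (\<mu> x * g x) \<le> norm (C * \<mu> x)" by (simp add: abs_mult mult.commute)
  qed
qed

lemma diff_bound: "\<bar>p::real\<bar> \<le> 1 \<Longrightarrow> x * p - \<bar>x - y\<bar> \<le> y * p"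
proof -
  assume p: "\<bar>p\<bar> \<le> 1"
  have "\<bar>(x - y) * p\<bar> \<le> \<bar>x - y\<bar>" using p
    by (simp add: abs_mult mult_left_le)
  moreover have "(x - y) * p = x * p - y * p" by (simp add: algebra_simps)
  ultimately show ?thesis by linarith
qed


lemma arith1: fixes e p0 D :: real assumes "0<e" "0<p0" "0<D" "D \<le> 1" "2*e < p0*D"
  shows "(1 - 2*e/(p0*D)) * e \<le> 2*e/(p0*D) * D * (p0 - 2*e)"
proof -
  have k: "0 < p0*D" using assms by simp
  have "(1 - 2*e/(p0*D)) * e = (p0*D - 2*e) * e / (p0*D)" using k assms
    by (simp add: divide_simps)
  moreover have "2*e/(p0*D) * D * (p0 - 2*e) = 2*e*D*(p0-2*e) / (p0*D)" by simp
  moreover have "(p0*D - 2*e) * e \<le> 2*e*D*(p0-2*e)"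
  proof -
    have "p0*D \<ge> 4*e*D - 2*e" using assms
      by (smt (verit) mult_left_mono mult_right_le_one_le)
    then have "e * (p0*D) \<ge> e*(4*e*D - 2*e)" using assms(1) by (intro mult_left_mono) auto
    then show ?thesis by (simp add: algebra_simps)
  qed
  then have "(p0*D - 2*e) * e / (p0*D) \<le> 2*e*D*(p0-2*e) / (p0*D)"
    using k by (intro divide_right_mono) auto
  ultimately show ?thesis by simp
qed

theorem mainTheorem8:
  fixes M :: "'w measure"
    and u Q :: "'s \<Rightarrow> 'w \<Rightarrow> 'a::finite \<Rightarrow> real"
    and s :: 's and H p0 D \<epsilon> :: real
    and \<mu>star \<mu>hat :: "'w \<Rightarrow> real"
  assumes u_range: "\<forall>s \<omega> a. 0 \<le> u s \<omega> a \<and> u s \<omega> a \<le> 1"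
    and Q_range: "\<forall>s \<omega> a. 0 \<le> Q s \<omega> a \<and> Q s \<omega> a \<le> H"
    and u_meas: "\<forall>s a. (\<lambda>\<omega>. u s \<omega> a) \<in> borel_measurable M"
    and Q_meas: "\<forall>s a. (\<lambda>\<omega>. Q s \<omega> a) \<in> borel_measurable M"
    and p0_pos: "p0 > 0" and D_pos: "D > 0"
    and star: "\<mu>star \<in> prob_dens M"
    and reg: "regular M u s \<mu>star p0 D"
    and eps: "\<epsilon> > 0"
    and hat: "\<mu>hat \<in> prob_dens M"
    and close: "l1_dist M \<mu>hat \<mu>star \<le> \<epsilon>"
  shows "Gap M u Q s \<mu>hat (ball_l1 M \<mu>hat \<epsilon>) \<le> 2 * H * \<epsilon> / (p0 * D)"
proof -
  have um[measurable]: "\<And>s a. (\<lambda>\<omega>. u s \<omega> a) \<in> borel_measurable M" using u_meas by auto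
  have Qm[measurable]: "\<And>s a. (\<lambda>\<omega>. Q s \<omega> a) \<in> borel_measurable M" using Q_meas by auto
  have hat_m[measurable]: "\<mu>hat \<in> borel_measurable M" and hat_nn: "\<forall>\<omega>\<in>space M. 0 \<le> \<mu>hat \<omega>"
    and hat_int: "integrable M \<mu>hat" and hat_1: "(\<integral>\<omega>. \<mu>hat \<omega> \<partial>M) = 1"
    using hat unfolding prob_dens_def by auto
  have star_m[measurable]: "\<mu>star \<in> borel_measurable M" and star_int: "integrable M \<mu>star"
    using star unfolding prob_dens_def by auto
  have H0: "0 \<le> H" using Q_range by (meson order_trans)
  define B where "B = ball_l1 M \<mu>hat \<epsilon>"
  define f where "f = (\<lambda>\<pi>. payoff M Q \<mu>hat \<pi> s)"
  define \<delta> where "\<delta> = min 1 (2*\<epsilon>/(p0*D))"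
  have d01: "0 \<le> \<delta>" "\<delta> \<le> 1" using eps p0_pos D_pos by (auto simp: \<delta>_def)
  have B_sub: "B \<subseteq> prob_dens M" by (auto simp: B_def ball_l1_def)
  have hatB: "\<mu>hat \<in> B" using hat eps by (auto simp: B_def ball_l1_def l1_dist_def)
  have g_bnd: "\<bar>\<Sum>a\<in>UNIV. \<pi> s \<omega> a * Q s \<omega> a\<bar> \<le> H" if "\<pi> \<in> schemes M" for \<pi> \<omega>
  proof -
    have nn: "\<And>a. 0 \<le> \<pi> s \<omega> a" and sm: "(\<Sum>a\<in>UNIV. \<pi> s \<omega> a) = 1"
      using that unfolding schemes_def by auto
    have "0 \<le> (\<Sum>a\<in>UNIV. \<pi> s \<omega> a * Q s \<omega> a)"
      using nn Q_range by (intro sum_nonneg) auto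
    moreover have "(\<Sum>a\<in>UNIV. \<pi> s \<omega> a * Q s \<omega> a) \<le> (\<Sum>a\<in>UNIV. \<pi> s \<omega> a * H)"
      using nn Q_range by (intro sum_mono mult_left_mono) auto
    moreover have "(\<Sum>a\<in>UNIV. \<pi> s \<omega> a * H) = H" using sm by (simp add: sum_distrib_right[symmetric])
    ultimately show ?thesis by simp
  qed
  have g_meas: "(\<lambda>\<omega>. \<Sum>a\<in>UNIV. \<pi> s \<omega> a * Q s \<omega> a) \<in> borel_measurable M" if "\<pi> \<in> schemes M" for \<pi>
  proof -
    have [measurable]: "\<And>a. (\<lambda>\<omega>. \<pi> s \<omega> a) \<in> borel_measurable M" using that unfolding schemes_def by auto
    show ?thesis by measurable
  qed
  have g_int: "integrable M (\<lambda>\<omega>. \<mu>hat \<omega> * (\<Sum>a\<in>UNIV. \<pi> s \<omega> a * Q s \<omega> a))" if "\<pi> \<in> schemes M" for \<pi>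
    by (rule int_bdd[OF hat_int g_meas[OF that] g_bnd[OF that]])
  have f_bnd: "0 \<le> f \<pi> \<and> f \<pi> \<le> H" if "\<pi> \<in> schemes M" for \<pi>
  proof
    show "0 \<le> f \<pi>" unfolding f_def payoff_def
      apply (rule integral_nonneg_AE, rule AE_I2)
      using hat_nn g_bnd[OF that] that unfolding schemes_def
      by (auto intro!: mult_nonneg_nonneg sum_nonneg simp: Q_range)
    have "f \<pi> \<le> (\<integral>\<omega>. \<mu>hat \<omega> * H \<partial>M)" unfolding f_def payoff_def
    proof (rule integral_mono[OF g_int[OF that]])
      show "integrable M (\<lambda>\<omega>. \<mu>hat \<omega> * H)" using hat_int by simp
      fix \<omega> assume "\<omega> \<in> space M"
      then show "\<mu>hat \<omega> * (\<Sum>a\<in>UNIV. \<pi> s \<omega> a * Q s \<omega> a) \<le> \<mu>hat \<omega> * H"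
        using hat_nn g_bnd[OF that, of \<omega>] by (intro mult_left_mono) auto
    qed
    also have "\<dots> = H" using hat_1 by simp
    finally show "f \<pi> \<le> H" .
  qed
  have piF2: "piF u \<in> PersSet M B u"
    unfolding PersSet_def using piF_schemes[OF u_meas] piF_Pers[OF u_meas] B_sub
    unfolding prob_dens_def by blast
  have P2sub: "PersSet M B u \<subseteq> Pers M \<mu>hat u"
    using hatB unfolding PersSet_def by auto
  have key: "\<exists>\<pi>'\<in>PersSet M B u. f \<pi> - \<delta>*H \<le> f \<pi>'" if \<pi>P: "\<pi> \<in> Pers M \<mu>hat u" for \<pi>
  proof -
    have \<pi>S: "\<pi> \<in> schemes M" and \<pi>pers: "\<And>s a a'. 0 \<le> (\<integral>\<omega>. \<mu>hat \<omega> * \<pi> s \<omega> a * (u s \<omega> a - u s \<omega> a') \<partial>M)"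
      using \<pi>P unfolding Pers_def by auto
    have \<pi>m[measurable]: "\<And>s a. (\<lambda>\<omega>. \<pi> s \<omega> a) \<in> borel_measurable M"
      and \<pi>nn: "\<And>s \<omega> a. 0 \<le> \<pi> s \<omega> a" and \<pi>sum: "\<And>s \<omega>. (\<Sum>a\<in>UNIV. \<pi> s \<omega> a) = 1"
      using \<pi>S unfolding schemes_def by auto
    have \<pi>le1: "\<pi> s' \<omega> a \<le> 1" for s' \<omega> a
    proof -
      have "\<pi> s' \<omega> a \<le> (\<Sum>a\<in>UNIV. \<pi> s' \<omega> a)" by (rule member_le_sum) (auto simp: \<pi>nn)
      then show ?thesis by (simp add: \<pi>sum)
    qed
    have piFm[measurable]: "\<And>s a. (\<lambda>\<omega>. piF u s \<omega> a) \<in> borel_measurable M" using piF_meas[OF u_meas] .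
    define \<pi>' where "\<pi>' = (\<lambda>s' \<omega> a. if s' = s then (1-\<delta>)*\<pi> s \<omega> a + \<delta>*piF u s \<omega> a else piF u s' \<omega> a)"
    have \<pi>'S: "\<pi>' \<in> schemes M"
      unfolding schemes_def
    proof (intro CollectI conjI allI)
      fix s' a show "(\<lambda>\<omega>. \<pi>' s' \<omega> a) \<in> borel_measurable M" unfolding \<pi>'_def by (cases "s'=s") simp_all
    next
      fix s' \<omega> a show "0 \<le> \<pi>' s' \<omega> a" unfolding \<pi>'_def using d01 \<pi>nn piF_nonneg by (auto intro!: add_nonneg_nonneg mult_nonneg_nonneg)
    next
      fix s' \<omega> show "(\<Sum>a\<in>UNIV. \<pi>' s' \<omega> a) = 1" unfolding \<pi>'_def
        by (cases "s'=s") (simp_all add: sum.distrib sum_distrib_left[symmetric] \<pi>sum piF_sum)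
    qed
    have f\<pi>': "f \<pi>' = (1-\<delta>) * f \<pi> + \<delta> * f (piF u)"
    proof -
      have eq: "\<mu>hat \<omega> * (\<Sum>a\<in>UNIV. \<pi>' s \<omega> a * Q s \<omega> a) = (1-\<delta>) * (\<mu>hat \<omega> * (\<Sum>a\<in>UNIV. \<pi> s \<omega> a * Q s \<omega> a)) + \<delta> * (\<mu>hat \<omega> * (\<Sum>a\<in>UNIV. piF u s \<omega> a * Q s \<omega> a))" for \<omega>
      proof -
        have sq: "(\<Sum>a\<in>UNIV. \<pi>' s \<omega> a * Q s \<omega> a) = (1-\<delta>) * (\<Sum>a\<in>UNIV. \<pi> s \<omega> a * Q s \<omega> a) + \<delta> * (\<Sum>a\<in>UNIV. piF u s \<omega> a * Q s \<omega> a)"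
          unfolding \<pi>'_def by (simp add: distrib_right sum.distrib sum_distrib_left mult.assoc)
        show ?thesis by (subst sq) (simp add: algebra_simps)
      qed
      show ?thesis unfolding f_def payoff_def eq
        using g_int[OF \<pi>S] g_int[OF piF_schemes[OF u_meas]] by simp
    qed
    have fle: "f \<pi> - \<delta>*H \<le> f \<pi>'"
    proof -
      have "\<delta> * f \<pi> \<le> \<delta> * H" using f_bnd[OF \<pi>S] d01 by (intro mult_left_mono) auto
      moreover have "0 \<le> \<delta> * f (piF u)" using f_bnd[OF piF_schemes[OF u_meas]] d01 by simp
      ultimately show ?thesis unfolding f\<pi>' by (simp add: algebra_simps)
    qed
    have "\<pi>' \<in> PersSet M B u"
      unfolding PersSet_def
    proof (intro CollectI conjI ballI \<pi>'S)
      fix \<mu>' assume \<mu>'B: "\<mu>' \<in> B"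
      have \<mu>'m[measurable]: "\<mu>' \<in> borel_measurable M" and \<mu>'nn: "\<forall>\<omega>\<in>space M. 0 \<le> \<mu>' \<omega>"
        and \<mu>'int: "integrable M \<mu>'" and \<mu>'close: "l1_dist M \<mu>hat \<mu>' \<le> \<epsilon>"
        using \<mu>'B unfolding B_def ball_l1_def prob_dens_def by auto
      show "\<pi>' \<in> Pers M \<mu>' u"
        unfolding Pers_def
      proof (intro CollectI conjI allI \<pi>'S)
        fix s' a a'
        show "0 \<le> (\<integral>\<omega>. \<mu>' \<omega> * \<pi>' s' \<omega> a * (u s' \<omega> a - u s' \<omega> a') \<partial>M)"
        proof (cases "s' = s")
          case False
          have "0 \<le> (\<integral>\<omega>. \<mu>' \<omega> * piF u s' \<omega> a * (u s' \<omega> a - u s' \<omega> a') \<partial>M)"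
            using piF_Pers[OF u_meas \<mu>'nn] unfolding Pers_def by auto
          then show ?thesis using False by (simp add: \<pi>'_def)
        next
          case True
          note sT = True
          show ?thesis
          proof (cases "a = a'")
            case True then show ?thesis by simp
          next
            case False
            note aa = False
            define \<Delta> where "\<Delta> = (\<lambda>\<omega>. u s \<omega> a - u s \<omega> a')"
            have \<Delta>m[measurable]: "\<Delta> \<in> borel_measurable M" unfolding \<Delta>_def by measurable
            have \<Delta>b: "\<bar>\<Delta> \<omega>\<bar> \<le> 1" for \<omega>
            proof -
              have "0 \<le> u s \<omega> a" "u s \<omega> a \<le> 1" "0 \<le> u s \<omega> a'" "u s \<omega> a' \<le> 1" using u_range by auto
              then show ?thesis unfolding \<Delta>_def by (auto simp: abs_le_iff)
            qed
            have \<pi>\<Delta>b: "\<bar>\<pi> s \<omega> a * \<Delta> \<omega>\<bar> \<le> 1" for \<omega>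
              using \<Delta>b[of \<omega>] \<pi>nn[of s \<omega> a] \<pi>le1[of s \<omega> a]
              by (simp add: abs_mult mult_le_one)
            have F\<Delta>b: "\<bar>piF u s \<omega> a * \<Delta> \<omega>\<bar> \<le> 1" for \<omega>
              using \<Delta>b[of \<omega>] piF_nonneg[of u s \<omega> a] piF_le1[of u s \<omega> a]
              by (simp add: abs_mult mult_le_one)
            have I1int: "integrable M (\<lambda>\<omega>. \<mu>' \<omega> * (\<pi> s \<omega> a * \<Delta> \<omega>))"
              by (rule int_bdd[OF \<mu>'int _ \<pi>\<Delta>b]) measurable
            have Jint: "integrable M (\<lambda>\<omega>. \<mu>hat \<omega> * (\<pi> s \<omega> a * \<Delta> \<omega>))"
              by (rule int_bdd[OF hat_int _ \<pi>\<Delta>b]) measurable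
            have I2int: "integrable M (\<lambda>\<omega>. \<mu>' \<omega> * (piF u s \<omega> a * \<Delta> \<omega>))"
              by (rule int_bdd[OF \<mu>'int _ F\<Delta>b]) measurable
            have abs1: "integrable M (\<lambda>\<omega>. \<bar>\<mu>hat \<omega> - \<mu>' \<omega>\<bar>)" using hat_int \<mu>'int by simp
            have abs2: "integrable M (\<lambda>\<omega>. \<bar>\<mu>hat \<omega> - \<mu>star \<omega>\<bar>)" using hat_int star_int by simp
            have abs3: "integrable M (\<lambda>\<omega>. \<bar>\<mu>star \<omega> - \<mu>' \<omega>\<bar>)" using star_int \<mu>'int by simp
            have l1a: "(\<integral>\<omega>. \<bar>\<mu>hat \<omega> - \<mu>' \<omega>\<bar> \<partial>M) \<le> \<epsilon>" using \<mu>'close by (simp add: l1_dist_def)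
            have l1b: "(\<integral>\<omega>. \<bar>\<mu>hat \<omega> - \<mu>star \<omega>\<bar> \<partial>M) \<le> \<epsilon>" using close by (simp add: l1_dist_def)
            have l1c: "(\<integral>\<omega>. \<bar>\<mu>star \<omega> - \<mu>' \<omega>\<bar> \<partial>M) \<le> 2*\<epsilon>"
            proof -
              have "(\<integral>\<omega>. \<bar>\<mu>star \<omega> - \<mu>' \<omega>\<bar> \<partial>M) \<le> (\<integral>\<omega>. \<bar>\<mu>hat \<omega> - \<mu>' \<omega>\<bar> + \<bar>\<mu>hat \<omega> - \<mu>star \<omega>\<bar> \<partial>M)"
                by (rule integral_mono) (use abs1 abs2 abs3 in auto)
              also have "\<dots> = (\<integral>\<omega>. \<bar>\<mu>hat \<omega> - \<mu>' \<omega>\<bar> \<partial>M) + (\<integral>\<omega>. \<bar>\<mu>hat \<omega> - \<mu>star \<omega>\<bar> \<partial>M)"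
                by (rule Bochner_Integration.integral_add[OF abs1 abs2])
              finally show ?thesis using l1a l1b by linarith
            qed
            define I1 where "I1 = (\<integral>\<omega>. \<mu>' \<omega> * (\<pi> s \<omega> a * \<Delta> \<omega>) \<partial>M)"
            define I2 where "I2 = (\<integral>\<omega>. \<mu>' \<omega> * (piF u s \<omega> a * \<Delta> \<omega>) \<partial>M)"
            have J0: "0 \<le> (\<integral>\<omega>. \<mu>hat \<omega> * (\<pi> s \<omega> a * \<Delta> \<omega>) \<partial>M)"
              using \<pi>pers[of s a a'] by (simp add: \<Delta>_def mult.assoc)
            have I1b: "-\<epsilon> \<le> I1"
            proof -
              have "(\<integral>\<omega>. \<mu>hat \<omega> * (\<pi> s \<omega> a * \<Delta> \<omega>) - \<bar>\<mu>hat \<omega> - \<mu>' \<omega>\<bar> \<partial>M) \<le> I1"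
                unfolding I1_def
                by (rule integral_mono) (use Jint abs1 I1int diff_bound[OF \<pi>\<Delta>b] in auto)
              moreover have "(\<integral>\<omega>. \<mu>hat \<omega> * (\<pi> s \<omega> a * \<Delta> \<omega>) - \<bar>\<mu>hat \<omega> - \<mu>' \<omega>\<bar> \<partial>M)
                  = (\<integral>\<omega>. \<mu>hat \<omega> * (\<pi> s \<omega> a * \<Delta> \<omega>) \<partial>M) - (\<integral>\<omega>. \<bar>\<mu>hat \<omega> - \<mu>' \<omega>\<bar> \<partial>M)"
                by (rule Bochner_Integration.integral_diff[OF Jint abs1])
              ultimately show ?thesis using J0 l1a by linarith
            qed
            define W where "W = Wset M u s a D"
            have Wp: "Measurable.pred M (\<lambda>\<omega>. \<forall>b\<in>UNIV. b \<noteq> a \<longrightarrow> D \<le> u s \<omega> a - u s \<omega> b)"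
              by (rule pred_intros_finite) measurable
            have Wm: "W \<in> sets M"
              using predE[OF Wp] unfolding W_def Wset_def by simp
            have indm[measurable]: "(\<lambda>\<omega>. indicator W \<omega> :: real) \<in> borel_measurable M"
              using Wm by simp
            have indb: "\<bar>indicator W \<omega> :: real\<bar> \<le> 1" for \<omega> by (simp add: indicator_def)
            have Wreg: "p0 \<le> (\<integral>\<omega>. \<mu>star \<omega> * indicator W \<omega> \<partial>M)"
              using reg unfolding regular_def W_def by (simp add: mult.commute)
            have D1: "D \<le> 1"
            proof (rule ccontr)
              assume "\<not> D \<le> 1"
              have "W = {}"
              proof -
                { fix \<omega> assume "\<omega> \<in> W"
                  then have "D \<le> u s \<omega> a - u s \<omega> a'" using aa unfolding W_def Wset_def by auto
                  moreover have "u s \<omega> a \<le> 1" "0 \<le> u s \<omega> a'" using u_range by auto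
                  ultimately have False using \<open>\<not> D \<le> 1\<close> by linarith }
                then show ?thesis by auto
              qed
              then show False using Wreg p0_pos by simp
            qed
            have indint1: "integrable M (\<lambda>\<omega>. \<mu>star \<omega> * indicator W \<omega>)"
              by (rule int_bdd[OF star_int indm indb])
            have indint2: "integrable M (\<lambda>\<omega>. \<mu>' \<omega> * indicator W \<omega>)"
              by (rule int_bdd[OF \<mu>'int indm indb])
            have Wmass: "p0 - 2*\<epsilon> \<le> (\<integral>\<omega>. \<mu>' \<omega> * indicator W \<omega> \<partial>M)"
            proof -
              have "(\<integral>\<omega>. \<mu>star \<omega> * indicator W \<omega> - \<bar>\<mu>star \<omega> - \<mu>' \<omega>\<bar> \<partial>M) \<le> (\<integral>\<omega>. \<mu>' \<omega> * indicator W \<omega> \<partial>M)"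
                by (rule integral_mono) (use indint1 abs3 indint2 diff_bound[OF indb] in auto)
              moreover have "(\<integral>\<omega>. \<mu>star \<omega> * indicator W \<omega> - \<bar>\<mu>star \<omega> - \<mu>' \<omega>\<bar> \<partial>M)
                  = (\<integral>\<omega>. \<mu>star \<omega> * indicator W \<omega> \<partial>M) - (\<integral>\<omega>. \<bar>\<mu>star \<omega> - \<mu>' \<omega>\<bar> \<partial>M)"
                by (rule Bochner_Integration.integral_diff[OF indint1 abs3])
              ultimately show ?thesis using Wreg l1c by linarith
            qed
            have I2b: "D * (p0 - 2*\<epsilon>) \<le> I2"
            proof -
              have "D * (p0 - 2*\<epsilon>) \<le> D * (\<integral>\<omega>. \<mu>' \<omega> * indicator W \<omega> \<partial>M)"
                using Wmass D_pos by (intro mult_left_mono) auto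
              also have "\<dots> = (\<integral>\<omega>. D * (\<mu>' \<omega> * indicator W \<omega>) \<partial>M)" by simp
              also have "\<dots> \<le> I2" unfolding I2_def
              proof (rule integral_mono)
                show "integrable M (\<lambda>\<omega>. D * (\<mu>' \<omega> * indicator W \<omega>))" using indint2 by simp
                show "integrable M (\<lambda>\<omega>. \<mu>' \<omega> * (piF u s \<omega> a * \<Delta> \<omega>))" by (rule I2int)
                fix \<omega> assume \<omega>: "\<omega> \<in> space M"
                have nn: "0 \<le> \<mu>' \<omega>" using \<mu>'nn \<omega> by auto
                show "D * (\<mu>' \<omega> * indicator W \<omega>) \<le> \<mu>' \<omega> * (piF u s \<omega> a * \<Delta> \<omega>)"
                proof (cases "\<omega> \<in> W")
                  case True
                  then have Wc: "\<forall>a'. a' \<noteq> a \<longrightarrow> u s \<omega> a - u s \<omega> a' \<ge> D" unfolding W_def Wset_def by auto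
                  have p1: "piF u s \<omega> a = 1" by (rule piF_W[where u=u and s=s and \<omega>=\<omega> and a=a, OF D_pos Wc])
                  have "D \<le> \<Delta> \<omega>" using Wc aa unfolding \<Delta>_def by auto
                  then have "\<mu>' \<omega> * D \<le> \<mu>' \<omega> * \<Delta> \<omega>" using nn by (rule mult_left_mono)
                  then show ?thesis using True p1 by (simp add: mult.commute)
                next
                  case False
                  then show ?thesis using nn piF_Delta_nonneg[of u s \<omega> a a']
                    by (simp add: \<Delta>_def)
                qed
              qed
              finally show ?thesis .
            qed
            have I20: "0 \<le> I2" unfolding I2_def
              apply (rule integral_nonneg_AE, rule AE_I2)
              using \<mu>'nn piF_Delta_nonneg[of u s _ a a'] unfolding \<Delta>_def by auto
            have eqI: "(\<integral>\<omega>. \<mu>' \<omega> * \<pi>' s' \<omega> a * (u s' \<omega> a - u s' \<omega> a') \<partial>M) = (1-\<delta>) * I1 + \<delta> * I2"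
            proof -
              have "(\<integral>\<omega>. \<mu>' \<omega> * \<pi>' s' \<omega> a * (u s' \<omega> a - u s' \<omega> a') \<partial>M)
                  = (\<integral>\<omega>. (1-\<delta>) * (\<mu>' \<omega> * (\<pi> s \<omega> a * \<Delta> \<omega>)) + \<delta> * (\<mu>' \<omega> * (piF u s \<omega> a * \<Delta> \<omega>)) \<partial>M)"
                unfolding sT \<pi>'_def \<Delta>_def by (simp add: algebra_simps)
              also have "\<dots> = (1-\<delta>) * I1 + \<delta> * I2"
                unfolding I1_def I2_def using I1int I2int by simp
              finally show ?thesis .
            qed
            show ?thesis
            proof (cases "2*\<epsilon>/(p0*D) \<ge> 1")
              case True
              then have "\<delta> = 1" by (simp add: \<delta>_def)
              then show ?thesis unfolding eqI using I20 by simp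
            next
              case False
              then have dd: "\<delta> = 2*\<epsilon>/(p0*D)" by (simp add: \<delta>_def)
              have "2*\<epsilon> < p0*D" using False p0_pos D_pos by (simp add: field_simps)
              then have ar: "(1 - \<delta>) * \<epsilon> \<le> \<delta> * D * (p0 - 2*\<epsilon>)"
                unfolding dd by (rule arith1[OF eps p0_pos D_pos D1])
              have "(1-\<delta>) * (-\<epsilon>) \<le> (1-\<delta>) * I1" using I1b d01 by (intro mult_left_mono) auto
              moreover have "\<delta> * (D * (p0 - 2*\<epsilon>)) \<le> \<delta> * I2" using I2b d01 by (intro mult_left_mono) auto
              ultimately show ?thesis unfolding eqI using ar by (simp add: algebra_simps)
            qed
          qed
        qed
      qed
    qed
    then show ?thesis using fle by auto
  qed
  have bdd: "bdd_above (f ` PersSet M B u)"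
    using f_bnd unfolding PersSet_def bdd_above_def by auto
  have "(SUP \<pi>\<in>Pers M \<mu>hat u. f \<pi>) \<le> (SUP \<pi>\<in>PersSet M B u. f \<pi>) + \<delta>*H"
  proof (rule cSUP_least)
    show "Pers M \<mu>hat u \<noteq> {}" using piF2 P2sub by auto
    fix \<pi> assume "\<pi> \<in> Pers M \<mu>hat u"
    from key[OF this] obtain \<pi>' where "\<pi>' \<in> PersSet M B u" "f \<pi> - \<delta>*H \<le> f \<pi>'" by auto
    moreover have "f \<pi>' \<le> (SUP \<pi>\<in>PersSet M B u. f \<pi>)" by (rule cSUP_upper[OF \<open>\<pi>' \<in> _\<close> bdd])
    ultimately show "f \<pi> \<le> (SUP \<pi>\<in>PersSet M B u. f \<pi>) + \<delta>*H" by linarith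
  qed
  moreover have "\<delta>*H \<le> 2 * H * \<epsilon> / (p0 * D)"
  proof -
    have "\<delta> \<le> 2*\<epsilon>/(p0*D)" by (simp add: \<delta>_def)
    then have "\<delta>*H \<le> 2*\<epsilon>/(p0*D) * H" using H0 by (rule mult_right_mono)
    then show ?thesis by (simp add: ac_simps)
  qed
  ultimately show ?thesis unfolding Gap_def f_def B_def by simp
qed

end
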